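(* Let $r\ge1$ be an integer, $d=2r-1$, $\beta>0$, and let $Q$ be a complex polynomial of degree $r$ with $Q(0)=0$. Define complex numbers $a_i,b_i$ ($0\le i\le d$) by $$1-2Q'(x)=\sum_{i=0}^d a_ix^i,\qquad x\big(Q'(x)^2-Q'(x)-Q''(x)\big)=\sum_{i=0}^d b_ix^i,$$ and assume $a_{r-1}b_d\neq0$. For $n\ge0$ and $0\le i\le \min(n,d)$ put $$\gamma_{ni}=\Big(a_i\big(n-i+\tfrac{\beta}{2}\big)+b_i\Big)\sqrt{\frac{n!(\beta)_n}{(n-i)!(\beta)_{n-i}}}.$$ Define polynomials $P_n$ by $P_0=1$, $P_n=0$ for $n<0$, and $$\Big(x+\frac{\beta}{2}\Big)P_n(x)=\sqrt{(n+1)(n+\beta)}\,P_{n+1}(x)+\sum_{i=0}^{\min(n,d)}\gamma_{ni}P_{n-i}(x),\qquad n\ge0.$$ Let $\psi_{nk}$ ($n,k\ge0$) be the matrix elements of $S=e^{J_+}e^{Q(J_-)}$ as described in the context. Then $\psi_{nk}=P_n(k)\,\psi_{0k}$ for all $n,k\ge0$, and $\{P_n\}_{n\ge0}$ is a $d$-orthogonal polynomial set.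
   Context: $(a)_n=a(a+1)\cdots(a+n-1)$, $(a)_0=1$. Let $H_\beta$ be a Hilbert space with orthonormal basis $\{|n\rangle\}_{n\ge0}$, and let $J_+,J_-,J_0$ act by $J_+|n\rangle=\sqrt{(n+1)(n+\beta)}\,|n+1\rangle$, $J_-|n\rangle=\sqrt{n(n+\beta-1)}\,|n-1\rangle$ ($J_-|0\rangle=0$), $J_0|n\rangle=(n+\frac\beta2)|n\rangle$ (the positive discrete series representation of $\mathfrak{su}(1,1)$, with $[J_-,J_+]=2J_0$, $[J_0,J_\pm]=\pm J_\pm$). For each $n$, $e^{Q(J_-)}|n\rangle=\sum_{m\ge0}\frac{1}{m!}Q(J_-)^m|n\rangle$ is a finite linear combination of $|0\rangle,\dots,|n\rangle$; applying $e^{J_+}=\sum_{m\ge0}J_+^m/m!$ to it formally, only finitely many terms contribute to the coefficient of each $|k\rangle$. The matrix element $\psi_{nk}=\langle k|S|n\rangle$ is defined as this coefficient of $|k\rangle$ in $e^{J_+}e^{Q(J_-)}|n\rangle$. A polynomial set is a sequence $\{P_n\}$ of polynomials with $\deg P_n=n$; for a positive integer $d$ it is $d$-orthogonal if there exist linear functionals $\mathcal{L}_0,\dots,\mathcal{L}_{d-1}$ on the space of polynomials such that for each $i$: $\mathcal{L}_i(P_mP_n)=0$ whenever $n\ge md+i+1$, and $\mathcal{L}_i(P_nP_{nd+i})\ne0$ for all $n\ge0$. *)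

theory Defs
  imports Complex_Main "HOL-Computational_Algebra.Polynomial"
begin

text \<open>Vectors of H_beta are represented by their coefficient functions
  nat \<Rightarrow> complex w.r.t. the orthonormal basis |n>.\<close>

definition basis_vec :: "nat \<Rightarrow> nat \<Rightarrow> complex" where
  "basis_vec n = (\<lambda>m. if m = n then 1 else 0)"

text \<open>J_+ |n> = sqrt((n+1)(n+beta)) |n+1>, so the coefficient of |m> in J_+ v is
  sqrt(m(m-1+beta)) v(m-1) for m >= 1 and 0 for m = 0.\<close>
definition Jplus :: "real \<Rightarrow> (nat \<Rightarrow> complex) \<Rightarrow> (nat \<Rightarrow> complex)" where
  "Jplus \<beta> v = (\<lambda>m. if m = 0 then 0
      else complex_of_real (sqrt (real m * (real m - 1 + \<beta>))) * v (m - 1))"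

text \<open>J_- |n> = sqrt(n(n+beta-1)) |n-1>, so the coefficient of |m> in J_- v is
  sqrt((m+1)(m+beta)) v(m+1).\<close>
definition Jminus :: "real \<Rightarrow> (nat \<Rightarrow> complex) \<Rightarrow> (nat \<Rightarrow> complex)" where
  "Jminus \<beta> v = (\<lambda>m. complex_of_real (sqrt (real (m + 1) * (real m + \<beta>))) * v (m + 1))"

definition QJminus :: "real \<Rightarrow> complex poly \<Rightarrow> (nat \<Rightarrow> complex) \<Rightarrow> (nat \<Rightarrow> complex)" where
  "QJminus \<beta> Q v = (\<lambda>m. \<Sum>j\<le>degree Q. coeff Q j * ((Jminus \<beta> ^^ j) v) m)"

definition expQJminus :: "real \<Rightarrow> complex poly \<Rightarrow> (nat \<Rightarrow> complex) \<Rightarrow> (nat \<Rightarrow> complex)" where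
  "expQJminus \<beta> Q v = (\<lambda>k. \<Sum>m. ((QJminus \<beta> Q ^^ m) v) k / fact m)"

definition expJplus :: "real \<Rightarrow> (nat \<Rightarrow> complex) \<Rightarrow> (nat \<Rightarrow> complex)" where
  "expJplus \<beta> v = (\<lambda>k. \<Sum>m. ((Jplus \<beta> ^^ m) v) k / fact m)"

definition psi :: "real \<Rightarrow> complex poly \<Rightarrow> nat \<Rightarrow> nat \<Rightarrow> complex" where
  "psi \<beta> Q n k = expJplus \<beta> (expQJminus \<beta> Q (basis_vec n)) k"

definition coef_a :: "complex poly \<Rightarrow> nat \<Rightarrow> complex" where
  "coef_a Q i = coeff (1 - smult 2 (pderiv Q)) i"

definition coef_b :: "complex poly \<Rightarrow> nat \<Rightarrow> complex" where
  "coef_b Q i = coeff ([:0, 1:] * ((pderiv Q)^2 - pderiv Q - pderiv (pderiv Q))) i"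

definition gamma :: "real \<Rightarrow> complex poly \<Rightarrow> nat \<Rightarrow> nat \<Rightarrow> complex" where
  "gamma \<beta> Q n i = (coef_a Q i * complex_of_real (real (n - i) + \<beta> / 2) + coef_b Q i)
     * complex_of_real (sqrt (fact n * pochhammer \<beta> n / (fact (n - i) * pochhammer \<beta> (n - i))))"

definition linear_functional :: "(complex poly \<Rightarrow> complex) \<Rightarrow> bool" where
  "linear_functional L \<longleftrightarrow> (\<forall>p q. L (p + q) = L p + L q) \<and> (\<forall>c p. L (smult c p) = c * L p)"

definition polynomial_set :: "(nat \<Rightarrow> complex poly) \<Rightarrow> bool" where
  "polynomial_set P \<longleftrightarrow> (\<forall>n. degree (P n) = n)"

definition d_orthogonal :: "nat \<Rightarrow> (nat \<Rightarrow> complex poly) \<Rightarrow> bool" where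
  "d_orthogonal d P \<longleftrightarrow> polynomial_set P \<and>
     (\<exists>L :: nat \<Rightarrow> complex poly \<Rightarrow> complex. \<forall>i<d. linear_functional (L i) \<and>
        (\<forall>m n. n \<ge> m * d + i + 1 \<longrightarrow> L i (P m * P n) = 0) \<and>
        (\<forall>n. L i (P n * P (n * d + i)) \<noteq> 0))"

end

theory Submission
  imports Defs "HOL-Computational_Algebra.Polynomial_FPS"
begin


definition Nn :: "real \<Rightarrow> nat \<Rightarrow> real" where
  "Nn \<beta> j = sqrt (fact j * pochhammer \<beta> j)"

lemma Nn_pos: "\<beta> > 0 \<Longrightarrow> Nn \<beta> j > 0"
  unfolding Nn_def by (simp add: pochhammer_pos)

lemma Nn_sq: "\<beta> > 0 \<Longrightarrow> (Nn \<beta> j)^2 = fact j * pochhammer \<beta> j"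
  unfolding Nn_def by (simp add: pochhammer_pos less_imp_le)

lemma Nn_Suc: "\<beta> > 0 \<Longrightarrow> Nn \<beta> (Suc j) = sqrt (real (j+1) * (real j + \<beta>)) * Nn \<beta> j"
proof -
  have "fact (Suc j) * pochhammer \<beta> (Suc j) = (real (j+1) * (real j + \<beta>)) * (fact j * pochhammer \<beta> j)"
    by (simp add: pochhammer_rec' algebra_simps)
  then show ?thesis unfolding Nn_def by (simp only: real_sqrt_mult)
qed


definition Vf :: "real \<Rightarrow> (nat \<Rightarrow> complex) \<Rightarrow> nat \<Rightarrow> nat \<Rightarrow> complex" where
  "Vf \<beta> f n = (\<lambda>j. if j \<le> n then complex_of_real (Nn \<beta> n / Nn \<beta> j) * f (n - j) else 0)"

lemma pCons0_mult: "pCons 0 (q::complex poly) = [:0,1:] * q"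
  by simp

context fixes \<beta> :: real assumes bpos: "\<beta> > 0" begin

lemma Jplus_pow: "(Jplus \<beta> ^^ m) w = (\<lambda>k. if m \<le> k then complex_of_real (Nn \<beta> k / Nn \<beta> (k-m)) * w (k-m) else 0)"
proof (induction m)
  case 0
  then show ?case using Nn_pos[OF bpos] by (auto simp: less_imp_neq[symmetric])
next
  case (Suc m)
  show ?case
  proof
    fix k
    show "(Jplus \<beta> ^^ Suc m) w k = (if Suc m \<le> k then complex_of_real (Nn \<beta> k / Nn \<beta> (k - Suc m)) * w (k - Suc m) else 0)"
    proof (cases k)
      case 0 then show ?thesis by (simp add: Jplus_def)
    next
      case (Suc k')
      then show ?thesis
        by (simp add: Jplus_def Suc.IH Nn_Suc[OF bpos] of_real_mult[symmetric] del: of_real_mult)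
    qed
  qed
qed


lemma Jminus_V: "Jminus \<beta> (Vf \<beta> (coeff p) n) = Vf \<beta> (coeff (pCons 0 p)) n"
proof
  fix j
  show "Jminus \<beta> (Vf \<beta> (coeff p) n) j = Vf \<beta> (coeff (pCons 0 p)) n j"
  proof (cases "j < n")
    case True
    then obtain l where l: "n - j = Suc l" "n - Suc j = l"
      by (metis Suc_diff_Suc)
    have "sqrt (real (j + 1) * (real j + \<beta>)) * (Nn \<beta> n / Nn \<beta> (Suc j)) = Nn \<beta> n / Nn \<beta> j"
    proof -
      have s: "sqrt (real (j + 1) * (real j + \<beta>)) > 0" using bpos by simp
      show ?thesis using Nn_pos[OF bpos, of j] s
        by (simp add: Nn_Suc[OF bpos] field_simps)
    qed
    then have h2: "complex_of_real (sqrt (real (j + 1) * (real j + \<beta>))) * (complex_of_real (Nn \<beta> n) / complex_of_real (Nn \<beta> (Suc j))) = complex_of_real (Nn \<beta> n) / complex_of_real (Nn \<beta> j)"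
      by (metis of_real_mult of_real_divide)
    have nz: "complex_of_real (Nn \<beta> j) \<noteq> 0" "complex_of_real (Nn \<beta> (Suc j)) \<noteq> 0"
      using Nn_pos[OF bpos, of j] Nn_pos[OF bpos, of "Suc j"] by auto
    show ?thesis using True l h2 nz
      by (simp add: Jminus_def Vf_def field_simps)
  next
    case False
    then show ?thesis by (auto simp: Jminus_def Vf_def)
  qed
qed


lemma Jminus_pow_V: "(Jminus \<beta> ^^ i) (Vf \<beta> (coeff p) n) = Vf \<beta> (coeff ([:0,1:]^i * p)) n"
  by (induction i) (simp_all add: Jminus_V mult.assoc)

lemma QJminus_V: "QJminus \<beta> Q (Vf \<beta> (coeff p) n) = Vf \<beta> (coeff (Q * p)) n"
proof
  fix m
  have QQ: "Q * p = (\<Sum>j\<le>degree Q. smult (coeff Q j) ([:0,1:]^j * p))"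
  proof -
    have "Q * p = (\<Sum>j\<le>degree Q. monom (coeff Q j) j) * p" by (simp add: poly_as_sum_of_monoms)
    also have "\<dots> = (\<Sum>j\<le>degree Q. smult (coeff Q j) ([:0,1:]^j * p))"
      by (simp add: sum_distrib_right monom_altdef)
    finally show ?thesis .
  qed
  show "QJminus \<beta> Q (Vf \<beta> (coeff p) n) m = Vf \<beta> (coeff (Q * p)) n m"
    unfolding QJminus_def Jminus_pow_V QQ
    by (simp add: Vf_def coeff_sum sum_distrib_left algebra_simps)
qed

lemma basis_V: "basis_vec n = Vf \<beta> (coeff 1) n"
  using Nn_pos[OF bpos, of n] by (auto simp: basis_vec_def Vf_def coeff_1)

lemma QJminus_pow: "(QJminus \<beta> Q ^^ m) (basis_vec n) = Vf \<beta> (coeff (Q^m)) n"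
proof (induction m)
  case 0
  show ?case by (simp only: funpow_0 power_0 basis_V)
next
  case (Suc m)
  then show ?case by (simp add: QJminus_V)
qed

end


definition Efps :: "complex poly \<Rightarrow> complex fps" where
  "Efps Q = fps_exp 1 oo fps_of_poly Q"

lemma E_nth: "fps_nth (Efps Q) l = (\<Sum>i=0..l. coeff (Q^i) l / fact i)"
  unfolding Efps_def fps_compose_nth by (simp add: fps_of_poly_power[symmetric])

lemma coeff_Qpow_zero:
  assumes "poly Q 0 = 0" "l < m" shows "coeff (Q^m) l = 0"
proof -
  obtain a q where Q: "Q = pCons a q" by (cases Q) auto
  have "a = 0" using assms(1) Q by simp
  then have Qx: "Q = [:0,1:] * q" using Q by simp
  have "Q^m = monom 1 m * q^m"
    unfolding Qx power_mult_distrib by (simp only: monom_altdef smult_1_left)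
  then show ?thesis using assms(2) by (simp add: coeff_monom_mult)
qed

lemma expQ_basis:
  assumes bpos: "\<beta> > 0" and Q0: "poly Q 0 = 0"
  shows "expQJminus \<beta> Q (basis_vec n) = Vf \<beta> (\<lambda>l. fps_nth (Efps Q) l) n"
proof
  fix j
  have "(\<Sum>m. (QJminus \<beta> Q ^^ m) (basis_vec n) j / fact m)
      = (\<Sum>m\<in>{0..n-j}. (QJminus \<beta> Q ^^ m) (basis_vec n) j / fact m)"
    by (rule suminf_finite) (auto simp: QJminus_pow[OF bpos] Vf_def coeff_Qpow_zero[OF Q0])
  also have "\<dots> = Vf \<beta> (\<lambda>l. fps_nth (Efps Q) l) n j"
    by (auto simp: QJminus_pow[OF bpos] Vf_def E_nth sum_distrib_left)
  finally show "expQJminus \<beta> Q (basis_vec n) j = Vf \<beta> (\<lambda>l. fps_nth (Efps Q) l) n j"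
    unfolding expQJminus_def .
qed

definition Wf :: "real \<Rightarrow> nat \<Rightarrow> complex fps" where
  "Wf \<beta> k = Abs_fps (\<lambda>j. complex_of_real (if j \<le> k then 1 / (fact j * pochhammer \<beta> j * fact (k - j)) else 0))"

lemma psi_formula:
  assumes bpos: "\<beta> > 0" and Q0: "poly Q 0 = 0"
  shows "psi \<beta> Q n k = complex_of_real (Nn \<beta> n * Nn \<beta> k) * fps_nth (Wf \<beta> k * Efps Q) n"
proof -
  define E where "E = Efps Q"
  define T where "T j = complex_of_real (Nn \<beta> n * Nn \<beta> k / (fact j * pochhammer \<beta> j * fact (k-j))) * fps_nth E (n - j)" for j
  have r1: "Nn \<beta> k / Nn \<beta> j * (Nn \<beta> n / Nn \<beta> j) / fact (k-j) = Nn \<beta> n * Nn \<beta> k / (fact j * pochhammer \<beta> j * fact (k-j))" for j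
  proof -
    have "Nn \<beta> j * Nn \<beta> j = fact j * pochhammer \<beta> j" using Nn_sq[OF bpos, of j] by (simp add: power2_eq_square)
    then show ?thesis by (simp add: field_simps)
  qed
  have "psi \<beta> Q n k = (\<Sum>m. (Jplus \<beta> ^^ m) (Vf \<beta> (\<lambda>l. fps_nth E l) n) k / fact m)"
    unfolding psi_def expJplus_def expQ_basis[OF bpos Q0] E_def ..
  also have "\<dots> = (\<Sum>m\<in>{0..k}. (Jplus \<beta> ^^ m) (Vf \<beta> (\<lambda>l. fps_nth E l) n) k / fact m)"
    by (rule suminf_finite) (auto simp: Jplus_pow[OF bpos])
  also have "\<dots> = (\<Sum>m\<in>{0..k}. complex_of_real (Nn \<beta> k / Nn \<beta> (k-m)) * Vf \<beta> (\<lambda>l. fps_nth E l) n (k-m) / fact m)"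
    by (rule sum.cong) (auto simp: Jplus_pow[OF bpos])
  also have "\<dots> = (\<Sum>j\<in>{0..k}. complex_of_real (Nn \<beta> k / Nn \<beta> j) * Vf \<beta> (\<lambda>l. fps_nth E l) n j / fact (k-j))"
    by (subst sum.atLeastAtMost_rev) (rule sum.cong, auto)
  also have "\<dots> = (\<Sum>j\<in>{0..k}. if j \<le> n then T j else 0)"
  proof (rule sum.cong)
    fix j assume "j \<in> {0..k}"
    show "complex_of_real (Nn \<beta> k / Nn \<beta> j) * Vf \<beta> (\<lambda>l. fps_nth E l) n j / fact (k-j) = (if j \<le> n then T j else 0)"
    proof (cases "j \<le> n")
      case True
      have "complex_of_real (Nn \<beta> k / Nn \<beta> j) * Vf \<beta> (\<lambda>l. fps_nth E l) n j / fact (k-j)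
          = complex_of_real (Nn \<beta> k / Nn \<beta> j * (Nn \<beta> n / Nn \<beta> j) / fact (k-j)) * fps_nth E (n-j)"
        using True by (simp add: Vf_def)
      then show ?thesis by (simp only: r1 T_def if_P[OF True])
    qed (simp add: Vf_def)
  qed simp
  also have "\<dots> = (\<Sum>j\<in>{0..min n k}. T j)"
    by (subst sum.inter_filter[symmetric]) (auto intro!: sum.cong)
  also have "\<dots> = (\<Sum>j\<in>{j\<in>{0..n}. j \<le> k}. T j)"
    by (rule sum.cong) auto
  also have "\<dots> = (\<Sum>j\<in>{0..n}. if j \<le> k then T j else 0)"
    by (rule sum.inter_filter) simp
  also have "\<dots> = complex_of_real (Nn \<beta> n * Nn \<beta> k) * fps_nth (Wf \<beta> k * E) n"
    unfolding fps_mult_nth sum_distrib_left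
    by (rule sum.cong) (auto simp: Wf_def T_def)
  finally show ?thesis unfolding E_def .
qed


lemma key_ring:
  fixes X W W1 W2 E q1 q2 K c b :: "'a::comm_ring_1"
  assumes "X*W2 + b*W1 = K*W - X*W1" "b = 2*c"
  shows "(K + c) * (W*E) = X*(W2*E + W1*(E*q1) + (W1*(E*q1) + W*(E*q1*q1 + E*q2))) + b*(W1*E + W*(E*q1))
     + (1 - 2*q1)*(X*(W1*E + W*(E*q1)) + c*(W*E)) + X*(q1^2 - q1 - q2)*(W*E)"
proof -
  let ?R = "X*(W2*E + W1*(E*q1) + (W1*(E*q1) + W*(E*q1*q1 + E*q2))) + b*(W1*E + W*(E*q1))
     + (1 - 2*q1)*(X*(W1*E + W*(E*q1)) + c*(W*E)) + X*(q1^2 - q1 - q2)*(W*E)"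
  have "?R = (K + c) * (W*E) + E*((X*W2 + b*W1) - (K*W - X*W1))"
    unfolding assms(2) by (simp add: algebra_simps power2_eq_square)
  then show ?thesis using assms(1) by simp
qed

lemma E_deriv:
  assumes "poly Q 0 = 0"
  shows "fps_deriv (Efps Q) = Efps Q * fps_deriv (fps_of_poly Q)"
proof -
  have "fps_nth (fps_of_poly Q) 0 = 0" using assms by (simp add: poly_0_coeff_0)
  then show ?thesis unfolding Efps_def by (simp add: fps_compose_deriv)
qed

lemma w_rec:
  fixes \<beta> :: real and k n :: nat
  defines "w \<equiv> \<lambda>j. if j \<le> k then 1 / (fact j * pochhammer \<beta> j * fact (k - j)) else (0::real)"
  assumes bpos: "\<beta> > 0"
  shows "(real n + 1) * (real n + \<beta>) * w (Suc n) = (real k - real n) * w n"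
proof (cases "Suc n \<le> k")
  case True
  have f: "fact (k - n) = real (k - n) * fact (k - Suc n)"
    using True by (metis Suc_diff_Suc Suc_le_lessD fact_Suc of_nat_fact of_nat_mult diff_Suc_Suc)
  have p: "pochhammer \<beta> (Suc n) = (\<beta> + real n) * pochhammer \<beta> n" by (simp add: pochhammer_rec')
  have pp: "pochhammer \<beta> n > 0" using bpos by (simp add: pochhammer_pos)
  have kn: "real (k - n) = real k - real n" using True by simp
  have kn0: "real k - real n > 0" using True by simp
  have nz: "fact n > (0::real)" "fact (k - Suc n) > (0::real)" "\<beta> + real n > 0" using bpos by auto
  define D where "D = fact n * pochhammer \<beta> n * fact (k - Suc n)"
  have D: "D > 0" unfolding D_def using pp nz by simp
  have gen: "x \<noteq> 0 \<Longrightarrow> x * (1 / (x * y)) = 1 / y" for x y :: real by simp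
  have x0: "(real n + 1) * (real n + \<beta>) \<noteq> 0" using bpos by simp
  have "w (Suc n) = 1 / (((real n + 1) * (real n + \<beta>)) * D)"
    using True unfolding w_def p D_def by (simp add: algebra_simps)
  then have "(real n + 1) * (real n + \<beta>) * w (Suc n) = 1 / D"
    using gen[OF x0] by simp
  moreover have "w n = 1 / ((real k - real n) * D)"
    using True unfolding w_def f kn D_def by (simp add: algebra_simps)
  then have "(real k - real n) * w n = 1 / D"
    using gen[of "real k - real n" D] kn0 by simp
  ultimately show ?thesis by simp
next
  case False
  then show ?thesis unfolding w_def
    by (cases "n = k") auto
qed

lemma W_ode:
  assumes bpos: "\<beta> > 0"
  shows "fps_X * fps_deriv (fps_deriv (Wf \<beta> k)) + fps_const (complex_of_real \<beta>) * fps_deriv (Wf \<beta> k)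
       = fps_const (of_nat k) * Wf \<beta> k - fps_X * fps_deriv (Wf \<beta> k)"
proof (rule fps_ext)
  fix n
  define w where "w \<equiv> \<lambda>j. if j \<le> k then 1 / (fact j * pochhammer \<beta> j * fact (k - j)) else (0::real)"
  have Wn: "fps_nth (Wf \<beta> k) j = complex_of_real (w j)" for j unfolding Wf_def w_def by simp
  have r: "(real n + 1) * (real n + \<beta>) * w (Suc n) = (real k - real n) * w n"
    unfolding w_def by (rule w_rec[OF bpos])
  have rc: "(of_nat n + 1) * (of_nat n + complex_of_real \<beta>) * complex_of_real (w (Suc n)) = (of_nat k - of_nat n) * complex_of_real (w n)"
    using arg_cong[OF r, of complex_of_real] by simp
  show "fps_nth (fps_X * fps_deriv (fps_deriv (Wf \<beta> k)) + fps_const (complex_of_real \<beta>) * fps_deriv (Wf \<beta> k)) n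
       = fps_nth (fps_const (of_nat k) * Wf \<beta> k - fps_X * fps_deriv (Wf \<beta> k)) n"
  proof (cases n)
    case 0
    then show ?thesis using rc by (simp add: Wn)
  next
    case (Suc m)
    then show ?thesis using rc by (simp add: Wn algebra_simps)
  qed
qed


lemma F_ident:
  fixes k :: nat
  assumes bpos: "\<beta> > 0" and Q0: "poly Q 0 = 0"
  defines "W \<equiv> Wf \<beta> k" and "E \<equiv> Efps Q" and "b \<equiv> complex_of_real \<beta>"
    and "A \<equiv> fps_of_poly (1 - smult 2 (pderiv Q))"
    and "B \<equiv> fps_of_poly ([:0,1:] * ((pderiv Q)^2 - pderiv Q - pderiv (pderiv Q)))"
  shows "fps_const (of_nat k + b/2) * (W*E) = fps_X * fps_deriv (fps_deriv (W*E)) + fps_const b * fps_deriv (W*E)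
          + A * (fps_X * fps_deriv (W*E) + fps_const (b/2) * (W*E)) + B * (W*E)"
proof -
  define q1 where "q1 = fps_deriv (fps_of_poly Q)"
  define q2 where "q2 = fps_deriv q1"
  have A: "A = 1 - 2 * q1"
    unfolding A_def q1_def by (simp add: fps_of_poly_diff fps_of_poly_smult fps_of_poly_pderiv fps_numeral_fps_const)
  have B: "B = fps_X * (q1^2 - q1 - q2)"
    unfolding B_def q1_def q2_def
    by (simp only: fps_of_poly_mult fps_of_poly_fps_X fps_of_poly_diff fps_of_poly_power fps_of_poly_pderiv)
  have DE: "fps_deriv E = E * q1" unfolding E_def q1_def by (rule E_deriv[OF Q0])
  have DEq: "fps_deriv (E * q1) = E*q1*q1 + E*q2" unfolding q2_def by (simp add: DE algebra_simps)
  have DF: "fps_deriv (W*E) = fps_deriv W * E + W * (E*q1)" by (simp add: DE algebra_simps)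
  have DDF: "fps_deriv (fps_deriv (W*E)) = fps_deriv (fps_deriv W) * E + fps_deriv W * (E*q1)
      + (fps_deriv W * (E*q1) + W * (E*q1*q1 + E*q2))"
    unfolding DF by (simp add: DE DEq algebra_simps q2_def)
  have c: "fps_const (of_nat k + b/2) = fps_const (of_nat k) + fps_const (b/2)" by simp
  have two: "fps_const b = 2 * fps_const (b/2)" by (simp add: fps_numeral_fps_const)
  have ode: "fps_X * fps_deriv (fps_deriv W) + fps_const b * fps_deriv W = fps_const (of_nat k) * W - fps_X * fps_deriv W"
    unfolding W_def b_def by (rule W_ode[OF bpos])
  show ?thesis unfolding A B DDF unfolding DF c
    by (rule key_ring[OF ode two])
qed

lemma nth1: "fps_nth (fps_X * fps_deriv (fps_deriv (F::complex fps)) + fps_const b * fps_deriv F) n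
   = (of_nat n + 1) * (of_nat n + b) * fps_nth F (Suc n)"
  by (cases n) (simp_all add: algebra_simps)

lemma nth2: "fps_nth (fps_X * fps_deriv (F::complex fps) + fps_const c * F) m = (of_nat m + c) * fps_nth F m"
  by (cases m) (simp_all add: algebra_simps)

lemma scalar_rec:
  fixes k n :: nat
  assumes bpos: "\<beta> > 0" and Q0: "poly Q 0 = 0"
  defines "F \<equiv> Wf \<beta> k * Efps Q" and "b \<equiv> complex_of_real \<beta>"
  shows "(of_nat k + b/2) * fps_nth F n = (of_nat n + 1) * (of_nat n + b) * fps_nth F (Suc n)
     + (\<Sum>i=0..n. (coef_a Q i * (of_nat (n-i) + b/2) + coef_b Q i) * fps_nth F (n-i))"
proof -
  have "fps_nth (fps_const (of_nat k + b/2) * F) n = fps_nth (fps_X * fps_deriv (fps_deriv F) + fps_const b * fps_deriv F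
          + fps_of_poly (1 - smult 2 (pderiv Q)) * (fps_X * fps_deriv F + fps_const (b/2) * F)
          + fps_of_poly ([:0,1:] * ((pderiv Q)^2 - pderiv Q - pderiv (pderiv Q))) * F) n"
    unfolding F_def b_def using F_ident[OF bpos Q0] by metis
  also have "\<dots> = (of_nat n + 1) * (of_nat n + b) * fps_nth F (Suc n)
     + (\<Sum>i=0..n. coef_a Q i * ((of_nat (n-i) + b/2) * fps_nth F (n-i)))
     + (\<Sum>i=0..n. coef_b Q i * fps_nth F (n-i))"
  proof -
    have h2: "fps_nth (fps_of_poly (1 - smult 2 (pderiv Q)) * (fps_X * fps_deriv F + fps_const (b/2) * F)) n
       = (\<Sum>i=0..n. coef_a Q i * ((of_nat (n-i) + b/2) * fps_nth F (n-i)))"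
      by (simp only: fps_mult_nth nth2 fps_of_poly_nth coef_a_def)
    have h3: "fps_nth (fps_of_poly ([:0,1:] * ((pderiv Q)^2 - pderiv Q - pderiv (pderiv Q))) * F) n
       = (\<Sum>i=0..n. coef_b Q i * fps_nth F (n-i))"
      by (simp only: fps_mult_nth fps_of_poly_nth coef_b_def)
    show ?thesis
      unfolding fps_add_nth[of "fps_X * fps_deriv (fps_deriv F) + fps_const b * fps_deriv F + _"]
        fps_add_nth[of "fps_X * fps_deriv (fps_deriv F) + fps_const b * fps_deriv F"] nth1 h2 h3 ..
  qed
  finally show ?thesis by (simp add: sum.distrib[symmetric] algebra_simps)
qed


lemma coef_a_zero:
  assumes "degree Q = r" "r \<ge> 1" "i \<ge> r" shows "coef_a Q i = 0"
proof -
  have "degree (1 - smult 2 (pderiv Q)) \<le> r - 1"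
    by (rule degree_diff_le) (use assms degree_smult_le[of 2 "pderiv Q"] in \<open>auto simp: degree_pderiv\<close>)
  then show ?thesis unfolding coef_a_def using assms by (intro coeff_eq_0) auto
qed

lemma coef_b_zero:
  assumes "degree Q = r" "r \<ge> 1" "i > 2*r - 1" shows "coef_b Q i = 0"
proof -
  have d1: "degree (pderiv Q) \<le> r - 1" using assms by (simp add: degree_pderiv)
  have d2: "degree ((pderiv Q)^2) \<le> 2*(r - 1)"
    using degree_power_le[of "pderiv Q" 2] d1 by simp
  have d3: "degree (pderiv (pderiv Q)) \<le> 2*(r - 1)" using assms by (simp add: degree_pderiv)
  have "degree ((pderiv Q)^2 - pderiv Q - pderiv (pderiv Q)) \<le> 2*(r-1)"
    using d1 d2 d3 by (intro degree_diff_le) auto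
  then have "degree ([:0,1:] * ((pderiv Q)^2 - pderiv Q - pderiv (pderiv Q))) \<le> 1 + 2*(r-1)"
    using degree_mult_le[of "[:0,1:]" "(pderiv Q)^2 - pderiv Q - pderiv (pderiv Q)"] by simp
  then show ?thesis unfolding coef_b_def using assms by (intro coeff_eq_0) auto
qed

lemma sqrt_ratio_Nn:
  assumes bpos: "\<beta> > 0" and "i \<le> n"
  shows "sqrt (fact n * pochhammer \<beta> n / (fact (n - i) * pochhammer \<beta> (n - i))) * Nn \<beta> (n - i) = Nn \<beta> n"
proof -
  have y: "fact (n - i) * pochhammer \<beta> (n - i) > 0" using bpos by (simp add: pochhammer_pos)
  have "sqrt (fact n * pochhammer \<beta> n / (fact (n - i) * pochhammer \<beta> (n - i))) * sqrt (fact (n - i) * pochhammer \<beta> (n - i))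
     = sqrt (fact n * pochhammer \<beta> n / (fact (n - i) * pochhammer \<beta> (n - i)) * (fact (n - i) * pochhammer \<beta> (n - i)))"
    by (rule real_sqrt_mult[symmetric])
  also have "\<dots> = sqrt (fact n * pochhammer \<beta> n)"
  proof -
    define D where "D = fact (n - i) * pochhammer \<beta> (n - i)"
    have "D \<noteq> 0" using y unfolding D_def by linarith
    then have "fact n * pochhammer \<beta> n / D * D = fact n * pochhammer \<beta> n" by simp
    then show ?thesis unfolding D_def by simp
  qed
  finally show ?thesis unfolding Nn_def .
qed

lemma psi_rec:
  assumes bpos: "\<beta> > 0" and Q0: "poly Q 0 = 0" and dQ: "degree Q = r" and r1: "r \<ge> 1"
  shows "(of_nat k + complex_of_real (\<beta>/2)) * psi \<beta> Q n k =
     complex_of_real (sqrt (real (n + 1) * (real n + \<beta>))) * psi \<beta> Q (Suc n) k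
     + (\<Sum>i\<le>min n (2 * r - 1). gamma \<beta> Q n i * psi \<beta> Q (n - i) k)"
proof -
  define F where "F j = fps_nth (Wf \<beta> k * Efps Q) j" for j
  define b where "b = complex_of_real \<beta>"
  define C where "C = complex_of_real (Nn \<beta> n * Nn \<beta> k)"
  have ps: "psi \<beta> Q j k = complex_of_real (Nn \<beta> j * Nn \<beta> k) * F j" for j
    unfolding F_def by (rule psi_formula[OF bpos Q0])
  have sr: "(of_nat k + b/2) * F n = (of_nat n + 1) * (of_nat n + b) * F (Suc n)
     + (\<Sum>i=0..n. (coef_a Q i * (of_nat (n-i) + b/2) + coef_b Q i) * F (n-i))"
    unfolding F_def b_def by (rule scalar_rec[OF bpos Q0])
  have t1: "complex_of_real (sqrt (real (n + 1) * (real n + \<beta>))) * psi \<beta> Q (Suc n) k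
      = C * ((of_nat n + 1) * (of_nat n + b) * F (Suc n))"
  proof -
    have "sqrt (real (n + 1) * (real n + \<beta>)) * (Nn \<beta> (Suc n) * Nn \<beta> k)
        = Nn \<beta> n * Nn \<beta> k * ((real n + 1) * (real n + \<beta>))"
      using bpos by (simp add: Nn_Suc[OF bpos] algebra_simps)
    then have e: "complex_of_real (sqrt (real (n + 1) * (real n + \<beta>))) * complex_of_real (Nn \<beta> (Suc n) * Nn \<beta> k)
        = C * complex_of_real ((real n + 1) * (real n + \<beta>))" unfolding C_def by (metis of_real_mult)
    have f: "complex_of_real ((real n + 1) * (real n + \<beta>)) = (of_nat n + 1) * (of_nat n + b)"
      unfolding b_def by simp
    have "complex_of_real (sqrt (real (n + 1) * (real n + \<beta>))) * psi \<beta> Q (Suc n) k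
       = (complex_of_real (sqrt (real (n + 1) * (real n + \<beta>))) * complex_of_real (Nn \<beta> (Suc n) * Nn \<beta> k)) * F (Suc n)"
      unfolding ps by (simp only: mult.assoc)
    then show ?thesis unfolding e f by (simp only: mult.assoc)
  qed
  have t2: "gamma \<beta> Q n i * psi \<beta> Q (n - i) k = C * ((coef_a Q i * (of_nat (n-i) + b/2) + coef_b Q i) * F (n-i))"
    if "i \<le> n" for i
  proof -
    have "sqrt (fact n * pochhammer \<beta> n / (fact (n - i) * pochhammer \<beta> (n - i))) * (Nn \<beta> (n - i) * Nn \<beta> k)
        = Nn \<beta> n * Nn \<beta> k"
      using sqrt_ratio_Nn[OF bpos that] by (simp add: mult.assoc[symmetric])
    then have e: "complex_of_real (sqrt (fact n * pochhammer \<beta> n / (fact (n - i) * pochhammer \<beta> (n - i))))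
         * complex_of_real (Nn \<beta> (n - i) * Nn \<beta> k) = C"
      unfolding C_def by (metis of_real_mult)
    have "gamma \<beta> Q n i * psi \<beta> Q (n - i) k = (coef_a Q i * complex_of_real (real (n - i) + \<beta> / 2) + coef_b Q i)
        * (complex_of_real (sqrt (fact n * pochhammer \<beta> n / (fact (n - i) * pochhammer \<beta> (n - i))))
         * complex_of_real (Nn \<beta> (n - i) * Nn \<beta> k)) * F (n - i)"
      unfolding gamma_def ps by (simp only: mult.assoc)
    also have "\<dots> = C * ((coef_a Q i * (of_nat (n-i) + b/2) + coef_b Q i) * F (n-i))"
      unfolding e b_def by simp
    finally show ?thesis .
  qed
  have t3: "(\<Sum>i\<le>min n (2 * r - 1). gamma \<beta> Q n i * psi \<beta> Q (n - i) k)
      = (\<Sum>i=0..n. C * ((coef_a Q i * (of_nat (n-i) + b/2) + coef_b Q i) * F (n-i)))"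
  proof -
    have "(\<Sum>i\<le>min n (2 * r - 1). gamma \<beta> Q n i * psi \<beta> Q (n - i) k)
        = (\<Sum>i\<le>min n (2 * r - 1). C * ((coef_a Q i * (of_nat (n-i) + b/2) + coef_b Q i) * F (n-i)))"
      by (rule sum.cong) (auto simp: t2)
    also have "\<dots> = (\<Sum>i=0..n. C * ((coef_a Q i * (of_nat (n-i) + b/2) + coef_b Q i) * F (n-i)))"
    proof (rule sum.mono_neutral_left)
      show "\<forall>i\<in>{0..n} - {..min n (2 * r - 1)}. C * ((coef_a Q i * (of_nat (n-i) + b/2) + coef_b Q i) * F (n-i)) = 0"
      proof
        fix i assume "i \<in> {0..n} - {..min n (2 * r - 1)}"
        then have "i > 2*r - 1" by auto
        then have "coef_a Q i = 0" "coef_b Q i = 0"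
          using coef_a_zero[OF dQ r1, of i] coef_b_zero[OF dQ r1, of i] r1 by auto
        then show "C * ((coef_a Q i * (of_nat (n-i) + b/2) + coef_b Q i) * F (n-i)) = 0" by simp
      qed
    qed auto
    finally show ?thesis .
  qed
  have "(of_nat k + complex_of_real (\<beta>/2)) * psi \<beta> Q n k = C * ((of_nat k + b/2) * F n)"
    unfolding ps C_def b_def by (simp add: algebra_simps)
  also have "\<dots> = C * ((of_nat n + 1) * (of_nat n + b) * F (Suc n))
     + (\<Sum>i=0..n. C * ((coef_a Q i * (of_nat (n-i) + b/2) + coef_b Q i) * F (n-i)))"
    unfolding sr by (simp add: algebra_simps sum_distrib_left)
  finally show ?thesis unfolding t1 t3 .
qed


fun coordf :: "(nat \<Rightarrow> complex poly) \<Rightarrow> nat \<Rightarrow> complex poly \<Rightarrow> nat \<Rightarrow> complex" where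
  "coordf P 0 p = (\<lambda>j. if j = 0 then coeff p 0 / coeff (P 0) 0 else 0)"
| "coordf P (Suc N) p = (let c = coeff p (Suc N) / coeff (P (Suc N)) (Suc N) in
     (coordf P N (p - smult c (P (Suc N))))(Suc N := c))"

lemma coordf_gt: "j > N \<Longrightarrow> coordf P N p j = 0"
  by (induction N arbitrary: p) (auto simp: Let_def)

lemma coordf_add: "coordf P N (p + q) j = coordf P N p j + coordf P N q j"
proof (induction N arbitrary: p q)
  case 0
  then show ?case by (simp add: add_divide_distrib)
next
  case (Suc N)
  define cp where "cp = coeff p (Suc N) / coeff (P (Suc N)) (Suc N)"
  define cq where "cq = coeff q (Suc N) / coeff (P (Suc N)) (Suc N)"
  have c: "coeff (p + q) (Suc N) / coeff (P (Suc N)) (Suc N) = cp + cq"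
    unfolding cp_def cq_def by (simp add: add_divide_distrib)
  have e: "p + q - smult (cp + cq) (P (Suc N)) = (p - smult cp (P (Suc N))) + (q - smult cq (P (Suc N)))"
    by (simp add: smult_add_left algebra_simps)
  show ?case
  proof (cases "j = Suc N")
    case True
    then show ?thesis by (simp only: coordf.simps Let_def c cp_def[symmetric] cq_def[symmetric] fun_upd_same)
  next
    case False
    show ?thesis
      unfolding coordf.simps Let_def c e cp_def[symmetric] cq_def[symmetric] fun_upd_other[OF False] Suc.IH by (rule refl)
  qed
qed

lemma coordf_smult: "coordf P N (smult a p) j = a * coordf P N p j"
proof (induction N arbitrary: p)
  case 0
  then show ?case by simp
next
  case (Suc N)
  define cp where "cp = coeff p (Suc N) / coeff (P (Suc N)) (Suc N)"
  have c: "coeff (smult a p) (Suc N) / coeff (P (Suc N)) (Suc N) = a * cp"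
    unfolding cp_def by simp
  have e: "smult a p - smult (a * cp) (P (Suc N)) = smult a (p - smult cp (P (Suc N)))"
    by (simp add: smult_diff_right)
  show ?case
  proof (cases "j = Suc N")
    case True
    then show ?thesis by (simp only: coordf.simps Let_def c cp_def[symmetric] fun_upd_same)
  next
    case False
    show ?thesis
      unfolding coordf.simps Let_def c e cp_def[symmetric] fun_upd_other[OF False] Suc.IH by (rule refl)
  qed
qed

lemma coordf_zero: "coordf P N 0 j = 0"
  using coordf_smult[of P N 0 0 j] by simp

lemma coordf_stable:
  assumes "degree p \<le> N" shows "coordf P (Suc N) p = coordf P N p"
proof -
  have "coeff p (Suc N) = 0" using assms by (simp add: coeff_eq_0)
  then show ?thesis using coordf_gt[of N "Suc N" P p] by (auto simp: Let_def)
qed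

lemma coordf_mono:
  assumes "degree p \<le> N" "N \<le> M" shows "coordf P M p = coordf P N p"
  using assms(2)
proof (induction M)
  case 0 then show ?case by simp
next
  case (Suc M)
  show ?case
  proof (cases "N = Suc M")
    case False
    then have "N \<le> M" using Suc.prems by simp
    then show ?thesis using Suc.IH coordf_stable[of p M P] assms(1) by simp
  qed simp
qed

definition Lf :: "(nat \<Rightarrow> complex poly) \<Rightarrow> nat \<Rightarrow> complex poly \<Rightarrow> complex" where
  "Lf P i p = coordf P (degree p) p i"

lemma Lf_alt: "degree p \<le> N \<Longrightarrow> Lf P i p = coordf P N p i"
  unfolding Lf_def using coordf_mono[of p "degree p" N P] by simp

lemma Lf_add: "Lf P i (p + q) = Lf P i p + Lf P i q"
proof -
  define M where "M = max (degree p) (degree q)"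
  have dp: "degree p \<le> M" and dq: "degree q \<le> M" unfolding M_def by auto
  have "degree (p + q) \<le> M" by (rule degree_add_le[OF dp dq])
  then have "Lf P i (p + q) = coordf P M (p + q) i" by (rule Lf_alt)
  also have "\<dots> = coordf P M p i + coordf P M q i" by (rule coordf_add)
  also have "\<dots> = Lf P i p + Lf P i q" using Lf_alt[OF dp] Lf_alt[OF dq] by (simp only:)
  finally show ?thesis .
qed

lemma Lf_smult: "Lf P i (smult a p) = a * Lf P i p"
proof -
  have d: "degree (smult a p) \<le> degree p" by (rule degree_smult_le)
  have "Lf P i (smult a p) = coordf P (degree p) (smult a p) i" by (rule Lf_alt[OF d])
  also have "\<dots> = a * coordf P (degree p) p i" by (rule coordf_smult)
  also have "\<dots> = a * Lf P i p" unfolding Lf_def ..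
  finally show ?thesis .
qed

lemma Lf_linear: "linear_functional (Lf P i)"
  unfolding linear_functional_def by (simp add: Lf_add Lf_smult)

lemma Lf_zero: "Lf P i 0 = 0"
  using Lf_smult[of P i 0 0] by simp

lemma Lf_sum: "finite A \<Longrightarrow> Lf P i (sum f A) = (\<Sum>x\<in>A. Lf P i (f x))"
  by (induction A rule: finite_induct) (simp_all add: Lf_zero Lf_add)

inductive inS :: "(nat \<Rightarrow> complex poly) \<Rightarrow> nat \<Rightarrow> complex poly \<Rightarrow> bool" for P lo where
  inS_P: "j \<ge> lo \<Longrightarrow> inS P lo (P j)"
| inS_add: "inS P lo p \<Longrightarrow> inS P lo q \<Longrightarrow> inS P lo (p + q)"
| inS_smult: "inS P lo p \<Longrightarrow> inS P lo (smult a p)"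

lemma inS_zero: "inS P lo 0"
  using inS_smult[OF inS_P[of lo lo P], of 0] by simp

lemma inS_diff: "inS P lo p \<Longrightarrow> inS P lo q \<Longrightarrow> inS P lo (p - q)"
  using inS_add[of P lo p "smult (-1) q"] inS_smult[of P lo q "-1"] by simp

lemma inS_mono: "inS P lo p \<Longrightarrow> lo' \<le> lo \<Longrightarrow> inS P lo' p"
  by (induction rule: inS.induct) (auto intro: inS.intros)

lemma inS_sum: "finite A \<Longrightarrow> (\<And>x. x \<in> A \<Longrightarrow> inS P lo (f x)) \<Longrightarrow> inS P lo (sum f A)"
  by (induction A rule: finite_induct) (auto intro: inS_zero inS_add)


lemma x_mult_eq: "[:0,1:] * (p::complex poly) = [:c,1:] * p - smult c p"
  by simp

context
  fixes P :: "nat \<Rightarrow> complex poly" and c :: complex and s :: "nat \<Rightarrow> complex"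
    and g :: "nat \<Rightarrow> nat \<Rightarrow> complex" and d :: nat
  assumes P0: "P 0 = 1"
    and rec: "\<And>n. [:c,1:] * P n = smult (s n) (P (Suc n)) + (\<Sum>i\<le>min n d. smult (g n i) (P (n - i)))"
    and snz: "\<And>n. s n \<noteq> 0"
    and gnz: "\<And>n. n \<ge> d \<Longrightarrow> g n d \<noteq> 0"
    and d1: "d \<ge> 1"
begin

lemma deg_all: "\<forall>j\<le>n. degree (P j) = j \<and> P j \<noteq> 0"
proof (induction n)
  case 0
  then show ?case using P0 by simp
next
  case (Suc n)
  have Pn: "degree (P n) = n" "P n \<noteq> 0" using Suc.IH by auto
  have h: "smult (s n) (P (Suc n)) = [:c,1:] * P n + - (\<Sum>i\<le>min n d. smult (g n i) (P (n - i)))"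
    using rec[of n] by (simp add: algebra_simps)
  have dA: "degree ([:c,1:] * P n) = Suc n"
    using Pn by (subst degree_mult_eq) auto
  have dS: "degree (\<Sum>i\<le>min n d. smult (g n i) (P (n - i))) \<le> n"
  proof (rule degree_sum_le)
    fix i assume "i \<in> {..min n d}"
    have "degree (smult (g n i) (P (n - i))) \<le> degree (P (n - i))" by (rule degree_smult_le)
    also have "\<dots> = n - i" using Suc.IH by auto
    finally show "degree (smult (g n i) (P (n - i))) \<le> n" by simp
  qed simp
  have "degree (smult (s n) (P (Suc n))) = Suc n"
    unfolding h using dA dS by (subst degree_add_eq_left) auto
  then have d: "degree (P (Suc n)) = Suc n" using snz[of n] by simp
  then have "P (Suc n) \<noteq> 0" by auto
  then show ?case using Suc.IH d by (auto simp: le_Suc_eq)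
qed

lemma degP: "degree (P n) = n" and PnZ: "P n \<noteq> 0"
  using deg_all[of n] by auto

lemma leadP: "coeff (P n) n \<noteq> 0"
  using degP[of n] PnZ[of n] by (metis leading_coeff_0_iff)

lemma coordf_P: "j \<le> N \<Longrightarrow> coordf P N (P j) l = (if l = j then 1 else 0)"
proof (induction N arbitrary: l)
  case 0
  then show ?case using P0 by simp
next
  case (Suc N)
  show ?case
  proof (cases "j = Suc N")
    case True
    have c1: "coeff (P (Suc N)) (Suc N) / coeff (P (Suc N)) (Suc N) = 1" using leadP[of "Suc N"] by simp
    show ?thesis unfolding True coordf.simps Let_def c1 by (simp add: coordf_zero)
  next
    case False
    then have jN: "j \<le> N" using Suc.prems by simp
    have c0: "coeff (P j) (Suc N) = 0" using jN degP[of j] by (intro coeff_eq_0) auto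
    show ?thesis using Suc.IH[OF jN] False by (auto simp: c0)
  qed
qed

lemma Lf_P: "Lf P i (P j) = (if i = j then 1 else 0)"
  unfolding Lf_def degP by (simp add: coordf_P)

lemma inS_vanish: "inS P lo p \<Longrightarrow> i < lo \<Longrightarrow> Lf P i p = 0"
  by (induction rule: inS.induct) (auto simp: Lf_P Lf_add Lf_smult)

lemma xP: "inS P (j - d) ([:0,1:] * P j)"
proof -
  have "[:0,1:] * P j = smult (s j) (P (Suc j)) + (\<Sum>i\<le>min j d. smult (g j i) (P (j - i))) - smult c (P j)"
    unfolding x_mult_eq[of _ c] rec ..
  also have "inS P (j - d) \<dots>"
    by (intro inS_diff inS_add inS_smult inS_P inS_sum) auto
  finally show ?thesis .
qed

lemma xP_lead:
  assumes "j \<ge> d" shows "inS P (j - d + 1) ([:0,1:] * P j - smult (g j d) (P (j - d)))"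
proof -
  obtain d' where d': "d = Suc d'" using d1 by (cases d) auto
  have md: "min j d = Suc d'" using assms d' by simp
  have S: "(\<Sum>i\<le>min j d. smult (g j i) (P (j-i))) = (\<Sum>i\<le>d'. smult (g j i) (P (j - i))) + smult (g j d) (P (j-d))"
    using md by (simp add: d')
  have "[:0,1:] * P j - smult (g j d) (P (j - d)) = smult (s j) (P (Suc j)) + (\<Sum>i\<le>d'. smult (g j i) (P (j - i))) - smult c (P j)"
    unfolding x_mult_eq[of _ c] rec S by (simp add: algebra_simps)
  also have "inS P (j - d + 1) \<dots>"
    using assms d' by (intro inS_diff inS_add inS_smult inS_P inS_sum) auto
  finally show ?thesis .
qed

lemma x_inS: "inS P lo p \<Longrightarrow> inS P (lo - d) ([:0,1:] * p)"
proof (induction rule: inS.induct)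
  case (inS_P j)
  then show ?case using xP[of j] by (rule_tac inS_mono) auto
next
  case (inS_add p q)
  show ?case using inS.inS_add[OF inS_add.IH] by (simp only: distrib_left)
next
  case (inS_smult p a)
  show ?case using inS.inS_smult[OF inS_smult.IH, of a] by (simp only: mult_smult_right)
qed

lemma xpow_inS: "inS P lo p \<Longrightarrow> inS P (lo - m*d) ([:0,1:]^m * p)"
proof (induction m)
  case 0 then show ?case by simp
next
  case (Suc m)
  have "inS P (lo - m*d - d) ([:0,1:] * ([:0,1:]^m * p))" by (rule x_inS[OF Suc.IH[OF Suc.prems]])
  moreover have "lo - m*d - d = lo - Suc m * d" by simp
  ultimately show ?case by (simp add: mult.assoc)
qed

lemma polymul_inS:
  assumes "degree q \<le> m" "inS P lo p" shows "inS P (lo - m*d) (q * p)"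
proof -
  have "q * p = (\<Sum>l\<le>degree q. smult (coeff q l) ([:0,1:]^l * p))"
  proof -
    have "q * p = (\<Sum>l\<le>degree q. monom (coeff q l) l) * p" by (simp add: poly_as_sum_of_monoms)
    then show ?thesis by (simp add: sum_distrib_right monom_altdef)
  qed
  also have "inS P (lo - m*d) \<dots>"
  proof (rule inS_sum)
    fix l assume "l \<in> {..degree q}"
    then have "l \<le> m" using assms(1) by simp
    then have "lo - m*d \<le> lo - l*d" by (simp add: diff_le_mono2)
    then show "inS P (lo - m*d) (smult (coeff q l) ([:0,1:]^l * p))"
      using xpow_inS[OF assms(2), of l] by (intro inS_smult) (rule inS_mono)
  qed simp
  finally show ?thesis .
qed

lemma lead_chain:
  "m*d \<le> N \<Longrightarrow> \<exists>\<kappa>. \<kappa> \<noteq> 0 \<and> inS P (N - m*d + 1) ([:0,1:]^m * P N - smult \<kappa> (P (N - m*d)))"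
proof (induction m)
  case 0
  then show ?case by (intro exI[of _ 1]) (simp add: inS_zero)
next
  case (Suc m)
  then have "m*d \<le> N" by simp
  from Suc.IH[OF this] obtain \<kappa> where k: "\<kappa> \<noteq> 0"
    and R: "inS P (N - m*d + 1) ([:0,1:]^m * P N - smult \<kappa> (P (N - m*d)))" by blast
  define j where "j = N - m*d"
  have jd: "j \<ge> d" using Suc.prems unfolding j_def by simp
  have jd2: "j - d = N - Suc m * d" unfolding j_def by simp
  have R1: "inS P (j - d + 1) ([:0,1:] * ([:0,1:]^m * P N - smult \<kappa> (P j)))"
    using x_inS[OF R] jd unfolding j_def by (rule_tac inS_mono) auto
  have R2: "inS P (j - d + 1) (smult \<kappa> ([:0,1:] * P j - smult (g j d) (P (j - d))))"
    by (rule inS_smult[OF xP_lead[OF jd]])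
  have eq: "[:0,1:]^Suc m * P N - smult (\<kappa> * g j d) (P (j - d))
     = [:0,1:] * ([:0,1:]^m * P N - smult \<kappa> (P j)) + smult \<kappa> ([:0,1:] * P j - smult (g j d) (P (j - d)))"
    by (simp add: algebra_simps smult_diff_right mult_smult_right)
  have "inS P (j - d + 1) ([:0,1:]^Suc m * P N - smult (\<kappa> * g j d) (P (j - d)))"
    unfolding eq by (rule inS_add[OF R1 R2])
  then show ?case using k gnz[OF jd] unfolding jd2 by (intro exI[of _ "\<kappa> * g j d"]) simp
qed

lemma d_orth: "d_orthogonal d P"
  unfolding d_orthogonal_def polynomial_set_def
proof (intro conjI allI exI[of _ "Lf P"] impI)
  show "degree (P n) = n" for n by (rule degP)
  fix i assume i: "i < d"
  show "linear_functional (Lf P i)" by (rule Lf_linear)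
  fix m n
  show "Lf P i (P m * P n) = 0" if "m * d + i + 1 \<le> n"
  proof -
    have "inS P (n - m*d) (P m * P n)"
      by (rule polymul_inS) (auto simp: degP intro: inS_P)
    moreover have "i < n - m*d" using that by simp
    ultimately show ?thesis by (rule inS_vanish)
  qed
next
  fix i n assume i: "i < d"
  define N where "N = n*d + i"
  define lc where "lc = coeff (P n) n"
  define R where "R = P n - monom lc n"
  have lc: "lc \<noteq> 0" unfolding lc_def by (rule leadP)
  have split: "P n * P N = smult lc ([:0,1:]^n * P N) + R * P N"
    unfolding R_def by (simp add: monom_altdef algebra_simps)
  have RS: "inS P (i+1) (R * P N)"
  proof (cases n)
    case 0
    then have "R = 0" unfolding R_def lc_def using P0 by simp
    then show ?thesis by (simp add: inS_zero)
  next
    case (Suc n')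
    have "degree R \<le> n'"
    proof (rule degree_le, intro allI impI)
      fix l assume "l > n'"
      then show "coeff R l = 0"
        unfolding R_def lc_def using degP[of n] Suc by (cases "l = n") (auto simp: coeff_monom coeff_eq_0)
    qed
    then have "inS P (N - n'*d) (R * P N)" by (rule polymul_inS) (rule inS_P, simp)
    moreover have "N - n'*d = i + d" unfolding N_def Suc by simp
    ultimately show ?thesis using d1 by (rule_tac inS_mono) auto
  qed
  obtain \<kappa> where k: "\<kappa> \<noteq> 0" and T: "inS P (N - n*d + 1) ([:0,1:]^n * P N - smult \<kappa> (P (N - n*d)))"
    using lead_chain[of n N] unfolding N_def by auto
  have Ni: "N - n*d = i" unfolding N_def by simp
  have "Lf P i ([:0,1:]^n * P N) = Lf P i (([:0,1:]^n * P N - smult \<kappa> (P i)) + smult \<kappa> (P i))" by simp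
  also have "\<dots> = \<kappa>"
  proof -
    have "Lf P i ([:0,1:]^n * P N - smult \<kappa> (P i)) = 0" using inS_vanish[OF T[unfolded Ni]] by simp
    then show ?thesis by (simp only: Lf_add Lf_smult Lf_P) simp
  qed
  finally have "Lf P i (P n * P N) = lc * \<kappa>"
    unfolding split using inS_vanish[OF RS] by (simp add: Lf_add Lf_smult)
  then show "Lf P i (P n * P (n * d + i)) \<noteq> 0" using lc k unfolding N_def by simp
qed

end

theorem mainTheorem2:
  fixes r :: nat and \<beta> :: real and Q :: "complex poly" and P :: "nat \<Rightarrow> complex poly"
  assumes "r \<ge> 1" and "\<beta> > 0"
    and "degree Q = r" and "poly Q 0 = 0"
    and "coef_a Q (r - 1) * coef_b Q (2 * r - 1) \<noteq> 0"
    and "P 0 = 1"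
    and "\<And>n. [:complex_of_real (\<beta> / 2), 1:] * P n =
           smult (complex_of_real (sqrt (real (n + 1) * (real n + \<beta>)))) (P (Suc n))
           + (\<Sum>i\<le>min n (2 * r - 1). smult (gamma \<beta> Q n i) (P (n - i)))"
  shows "(\<forall>n k. psi \<beta> Q n k = poly (P n) (of_nat k) * psi \<beta> Q 0 k)
         \<and> d_orthogonal (2 * r - 1) P"
proof
  note r1 = assms(1) and bpos = assms(2) and dQ = assms(3) and Q0 = assms(4) and ab = assms(5)
    and P0 = assms(6) and rec = assms(7)
  define sf where "sf n = complex_of_real (sqrt (real (n + 1) * (real n + \<beta>)))" for n
  have snz: "sf n \<noteq> 0" for n
  proof -
    have "real n + \<beta> > 0" using bpos by simp
    then show ?thesis unfolding sf_def by simp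
  qed
  show "\<forall>n k. psi \<beta> Q n k = poly (P n) (of_nat k) * psi \<beta> Q 0 k"
  proof (intro allI)
    fix n k
    show "psi \<beta> Q n k = poly (P n) (of_nat k) * psi \<beta> Q 0 k"
    proof (induction n rule: less_induct)
      case (less n)
      show ?case
      proof (cases n)
        case 0
        then show ?thesis using P0 by simp
      next
        case (Suc m)
        define x :: complex where "x = of_nat k"
        define S1 where "S1 = (\<Sum>i\<le>min m (2 * r - 1). gamma \<beta> Q m i * psi \<beta> Q (m - i) k)"
        define S2 where "S2 = (\<Sum>i\<le>min m (2 * r - 1). gamma \<beta> Q m i * poly (P (m - i)) x)"
        have e1: "(x + complex_of_real (\<beta>/2)) * psi \<beta> Q m k = sf m * psi \<beta> Q (Suc m) k + S1"
          unfolding x_def sf_def S1_def by (rule psi_rec[OF bpos Q0 dQ r1])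
        have e2: "(complex_of_real (\<beta>/2) + x) * poly (P m) x = sf m * poly (P (Suc m)) x + S2"
        proof -
          have "poly ([:complex_of_real (\<beta> / 2), 1:] * P m) x = poly (smult (sf m) (P (Suc m))
             + (\<Sum>i\<le>min m (2 * r - 1). smult (gamma \<beta> Q m i) (P (m - i)))) x"
            unfolding sf_def using rec[of m] by simp
          then show ?thesis unfolding S2_def by (simp add: poly_sum algebra_simps)
        qed
        have ih: "psi \<beta> Q j k = poly (P j) x * psi \<beta> Q 0 k" if "j \<le> m" for j
          using less.IH[of j] that Suc unfolding x_def by simp
        have S12: "S1 = S2 * psi \<beta> Q 0 k"
          unfolding S1_def S2_def sum_distrib_right
        proof (rule sum.cong)
          fix i assume "i \<in> {..min m (2 * r - 1)}"
          show "gamma \<beta> Q m i * psi \<beta> Q (m - i) k = gamma \<beta> Q m i * poly (P (m - i)) x * psi \<beta> Q 0 k"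
            using ih[of "m - i"] by simp
        qed simp
        have "sf m * psi \<beta> Q (Suc m) k = (x + complex_of_real (\<beta>/2)) * psi \<beta> Q m k - S1"
          using e1 by simp
        also have "\<dots> = ((complex_of_real (\<beta>/2) + x) * poly (P m) x - S2) * psi \<beta> Q 0 k"
          unfolding S12 ih[OF order_refl] by (simp add: algebra_simps)
        also have "\<dots> = sf m * (poly (P (Suc m)) x * psi \<beta> Q 0 k)"
          using e2 by (simp add: algebra_simps)
        finally have "psi \<beta> Q (Suc m) k = poly (P (Suc m)) x * psi \<beta> Q 0 k"
          using snz[of m] by simp
        then show ?thesis unfolding Suc x_def .
      qed
    qed
  qed
  have gnz: "gamma \<beta> Q n (2*r-1) \<noteq> 0" if "n \<ge> 2*r-1" for n
  proof -
    have a0: "coef_a Q (2*r-1) = 0" using coef_a_zero[OF dQ r1] r1 by simp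
    have b0: "coef_b Q (2*r-1) \<noteq> 0" using ab by auto
    have pos: "fact n * pochhammer \<beta> n / (fact (n - (2*r-1)) * pochhammer \<beta> (n - (2*r-1))) > 0"
      using bpos by (simp add: pochhammer_pos)
    define y where "y = sqrt (fact n * pochhammer \<beta> n / (fact (n - (2*r-1)) * pochhammer \<beta> (n - (2*r-1))))"
    have y: "y > 0" unfolding y_def using pos by simp
    have "gamma \<beta> Q n (2*r-1) = (coef_a Q (2*r-1) * complex_of_real (real (n - (2*r-1)) + \<beta> / 2) + coef_b Q (2*r-1)) * complex_of_real y"
      unfolding gamma_def y_def by (rule refl)
    then have "gamma \<beta> Q n (2*r-1) = coef_b Q (2*r-1) * complex_of_real y"
      by (simp only: a0 mult_zero_left add_0_left)
    then show ?thesis using b0 y by simp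
  qed
  have d1: "2*r-1 \<ge> 1" using r1 by simp
  show "d_orthogonal (2 * r - 1) P"
    by (rule d_orth[of P "complex_of_real (\<beta>/2)" sf "gamma \<beta> Q" "2*r-1", OF P0 rec[folded sf_def] snz gnz d1])
qed

end
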